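(* Let $n\geq 3$ and let $C_n^*$ be the complex described in the context. Let $D$ be an $S^3$-knotlike chain complex over $R$, and let $f\colon C_n^*\to D$ and $g\colon D\to C_n^*$ be $R$-linear chain maps. Then the image of $g f(\alpha_n^* )$ is a boundary in the complex $C_n^*\otimes_R\mathbb{F}[\mathcal{U}]/(\mathcal{U}^{n-1})$, where $\mathcal{V}$ acts on $\mathbb{F}[\mathcal{U}]/(\mathcal{U}^{n-1})$ as $1$.
   Context: Let $\mathbb{F}=\mathbb{Z}/2$ and $R=\mathbb{F}[\mathcal{U},\mathcal{V}]$. A chain complex $D$ over $R$ is $S^3$-knotlike if $H_*(D\otimes_R\mathbb{F}[\mathcal{U}])\cong\mathbb{F}[\mathcal{U}]$ as $\mathbb{F}[\mathcal{U}]$-modules, where $\mathcal{V}$ acts on $\mathbb{F}[\mathcal{U}]$ as $1$. For $n\geq 3$, $C_n^*$ is the free $R$-module with basis $\alpha^*_s$ ($1\leq s\leq 2n-1$); $\widetilde{\alpha}^*_s$ ($1\leq s\leq n-2$ and $n+1\leq s\leq 2n-2$); $b^{*,(s)}_{n-1}$ ($1\leq s\leq n-2$); $b^{*,(s)}_{n}$ ($1\leq s\leq 2n-2$); $b^{*,(s)}_{n+1}$ ($n+1\leq s\leq 2n-2$), with $R$-linear differential $\partial$ given by $\partial\alpha^*_s=0$, $\partial\widetilde{\alpha}^*_s=0$, and $\partial b^{*,(s)}_{n-1}=\mathcal{U}^{n(n-1)/2}\mathcal{V}^{n(n-1)/2}\alpha^*_s+\mathcal{V}^{n-s-1}\widetilde{\alpha}^*_s$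 for $1\leq s\leq n-2$; $\partial b^{*,(s)}_{n}=\mathcal{U}^{n(n+1)/2-s}\mathcal{V}^{n(n+1)/2}\alpha^*_{s+1}+\mathcal{U}^{n}\widetilde{\alpha}^*_s$ for $1\leq s\leq n-2$; $\partial b^{*,(s)}_{n}=\mathcal{U}^{n(n+1)/2}\mathcal{V}^{n(n-1)/2-n+s+1}\alpha^*_s+\mathcal{U}^{n(n+1)/2-s}\mathcal{V}^{n(n+1)/2}\alpha^*_{s+1}$ for $n-1\leq s\leq n$; $\partial b^{*,(s)}_{n}=\mathcal{U}^{n(n+1)/2}\mathcal{V}^{n(n-1)/2-n+s+1}\alpha^*_s+\mathcal{V}^{n}\widetilde{\alpha}^*_s$ for $n+1\leq s\leq 2n-2$; $\partial b^{*,(s)}_{n+1}=\mathcal{U}^{n(n-1)/2}\mathcal{V}^{n(n-1)/2}\alpha^*_{s+1}+\mathcal{U}^{s-n}\widetilde{\alpha}^*_s$ for $n+1\leq s\leq 2n-2$. *)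

theory Defs
  imports "HOL-Library.Z2" "HOL-Computational_Algebra.Polynomial"
begin

text \<open>The ground field F = Z/2 is the type bit.  R = F[U,V] is rendered as
  bit poly poly: the outer variable is V, the inner variable (coefficient ring F[U]) is U.\<close>

type_synonym R = "bit poly poly"

definition UU :: R where "UU = [:[:0, 1:]:]"
definition VV :: R where "VV = [:0, 1:]"

definition evV1 :: "R \<Rightarrow> bit poly" where "evV1 r = poly r 1"

text \<open>Generators of C_n^*: Al s = alpha_s, AlT s = alpha-tilde_s,
  Bm s = b_{n-1}^{(s)}, B0 s = b_n^{(s)}, Bp s = b_{n+1}^{(s)}.\<close>
datatype gen = Al nat | AlT nat | Bm nat | B0 nat | Bp nat

definition gens :: "nat \<Rightarrow> gen set" where
  "gens n = {Al s | s. 1 \<le> s \<and> s \<le> 2*n - 1}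
     \<union> {AlT s | s. (1 \<le> s \<and> s \<le> n - 2) \<or> (n + 1 \<le> s \<and> s \<le> 2*n - 2)}
     \<union> {Bm s | s. 1 \<le> s \<and> s \<le> n - 2}
     \<union> {B0 s | s. 1 \<le> s \<and> s \<le> 2*n - 2}
     \<union> {Bp s | s. n + 1 \<le> s \<and> s \<le> 2*n - 2}"

text \<open>bdC n g h = coefficient of the generator h in the differential of the generator g.\<close>
fun bdC :: "nat \<Rightarrow> gen \<Rightarrow> gen \<Rightarrow> R" where
  "bdC n (Al s) h = 0"
| "bdC n (AlT s) h = 0"
| "bdC n (Bm s) h =
     (if h = Al s then UU ^ (n*(n-1) div 2) * VV ^ (n*(n-1) div 2) else 0)
   + (if h = AlT s then VV ^ (n - s - 1) else 0)"
| "bdC n (B0 s) h =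
     (if s \<le> n - 2 then
        (if h = Al (s+1) then UU ^ (n*(n+1) div 2 - s) * VV ^ (n*(n+1) div 2) else 0)
      + (if h = AlT s then UU ^ n else 0)
      else if s \<le> n then
        (if h = Al s then UU ^ (n*(n+1) div 2) * VV ^ (n*(n-1) div 2 + s + 1 - n) else 0)
      + (if h = Al (s+1) then UU ^ (n*(n+1) div 2 - s) * VV ^ (n*(n+1) div 2) else 0)
      else
        (if h = Al s then UU ^ (n*(n+1) div 2) * VV ^ (n*(n-1) div 2 + s + 1 - n) else 0)
      + (if h = AlT s then VV ^ n else 0))"
| "bdC n (Bp s) h =
     (if h = Al (s+1) then UU ^ (n*(n-1) div 2) * VV ^ (n*(n-1) div 2) else 0)
   + (if h = AlT s then UU ^ (s - n) else 0)"

text \<open>A free finitely generated chain complex D over R with basis the finite type 'b: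
  dD b b' = coefficient of b' in the differential of b.\<close>
definition is_complex :: "('b::finite \<Rightarrow> 'b \<Rightarrow> R) \<Rightarrow> bool" where
  "is_complex dD \<longleftrightarrow> (\<forall>b b''. (\<Sum>b'\<in>UNIV. dD b b' * dD b' b'') = 0)"

text \<open>Differential of D \<otimes>_R F[U] (V acting as 1), on coefficient vectors.\<close>
definition dU :: "('b::finite \<Rightarrow> 'b \<Rightarrow> R) \<Rightarrow> ('b \<Rightarrow> bit poly) \<Rightarrow> ('b \<Rightarrow> bit poly)" where
  "dU dD x = (\<lambda>b'. \<Sum>b\<in>UNIV. x b * evV1 (dD b b'))"

definition cycU :: "('b::finite \<Rightarrow> 'b \<Rightarrow> R) \<Rightarrow> ('b \<Rightarrow> bit poly) \<Rightarrow> bool" where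
  "cycU dD x \<longleftrightarrow> dU dD x = (\<lambda>_. 0)"

definition bndU :: "('b::finite \<Rightarrow> 'b \<Rightarrow> R) \<Rightarrow> ('b \<Rightarrow> bit poly) \<Rightarrow> bool" where
  "bndU dD x \<longleftrightarrow> (\<exists>y. x = dU dD y)"

text \<open>S^3-knotlike: H_*(D \<otimes> F[U]) is isomorphic to F[U] as an F[U]-module, i.e. there is a
  cycle z such that p \<mapsto> [p z] is a bijection F[U] -> H_*(D \<otimes> F[U]).\<close>
definition knotlike :: "('b::finite \<Rightarrow> 'b \<Rightarrow> R) \<Rightarrow> bool" where
  "knotlike dD \<longleftrightarrow> (\<exists>z. cycU dD z
      \<and> (\<forall>x. cycU dD x \<longrightarrow> (\<exists>p. bndU dD (\<lambda>b. x b - p * z b)))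
      \<and> (\<forall>p. bndU dD (\<lambda>b. p * z b) \<longrightarrow> p = 0))"

text \<open>R-linear chain map f : C_n^* -> D, f(g) = sum_b F g b * b.\<close>
definition chain_map_CD :: "nat \<Rightarrow> ('b::finite \<Rightarrow> 'b \<Rightarrow> R) \<Rightarrow> (gen \<Rightarrow> 'b \<Rightarrow> R) \<Rightarrow> bool" where
  "chain_map_CD n dD F \<longleftrightarrow> (\<forall>g\<in>gens n. \<forall>b.
      (\<Sum>h\<in>gens n. bdC n g h * F h b) = (\<Sum>b'\<in>UNIV. F g b' * dD b' b))"

text \<open>R-linear chain map g : D -> C_n^*, g(b) = sum_h G b h * h (supported on gens n).\<close>
definition chain_map_DC :: "nat \<Rightarrow> ('b::finite \<Rightarrow> 'b \<Rightarrow> R) \<Rightarrow> ('b \<Rightarrow> gen \<Rightarrow> R) \<Rightarrow> bool" where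
  "chain_map_DC n dD G \<longleftrightarrow> (\<forall>b h. h \<notin> gens n \<longrightarrow> G b h = 0) \<and>
     (\<forall>b. \<forall>h\<in>gens n.
      (\<Sum>b'\<in>UNIV. dD b b' * G b' h) = (\<Sum>g\<in>gens n. G b g * bdC n g h))"

text \<open>x (an element of C_n^*) maps to a boundary in C_n^* \<otimes>_R F[U]/(U^{n-1}), V acting as 1.\<close>
definition boundary_mod :: "nat \<Rightarrow> (gen \<Rightarrow> R) \<Rightarrow> bool" where
  "boundary_mod n x \<longleftrightarrow> (\<exists>y :: gen \<Rightarrow> bit poly. \<forall>h\<in>gens n.
      [:0, 1:] ^ (n - 1) dvd ((\<Sum>g\<in>gens n. y g * evV1 (bdC n g h)) - evV1 (x h)))"

end

theory Submission
  imports Defs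
begin

lemma evV1_add: "evV1 (a + b) = evV1 a + evV1 b" by (simp add: evV1_def)
lemma evV1_mult: "evV1 (a * b) = evV1 a * evV1 b" by (simp add: evV1_def)
lemma evV1_pow: "evV1 (a ^ k) = evV1 a ^ k" by (simp add: evV1_def)
lemma evV1_sum: "evV1 (sum f A) = (\<Sum>x\<in>A. evV1 (f x))" by (simp add: evV1_def poly_sum)
lemma evV1_0: "evV1 0 = 0" by (simp add: evV1_def)
lemma evV1_UU: "evV1 UU = [:0,1:]" by (simp add: evV1_def UU_def)
lemma evV1_VV: "evV1 VV = 1" by (simp add: evV1_def VV_def)

lemma dU_lin: "dU dD (\<lambda>b. c * x b + d * y b) = (\<lambda>b. c * dU dD x b + d * dU dD y b)"
  by (rule ext) (simp add: dU_def algebra_simps sum.distrib sum_distrib_left)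

lemma dU_diff: "dU dD (\<lambda>b. x b - y b) = (\<lambda>b. dU dD x b - dU dD y b)"
  by (rule ext) (simp add: dU_def algebra_simps sum_subtractf)

lemma finite_gens: "finite (gens n)"
proof -
  have "gens n \<subseteq> Al ` {..2*n} \<union> AlT ` {..2*n} \<union> Bm ` {..2*n} \<union> B0 ` {..2*n} \<union> Bp ` {..2*n}"
    unfolding gens_def by auto
  moreover have "finite (Al ` {..2*n} \<union> AlT ` {..2*n} \<union> Bm ` {..2*n} \<union> B0 ` {..2*n} \<union> Bp ` {..2*n})"
    by simp
  ultimately show ?thesis by (rule finite_subset)
qed

theorem lemma2p11:
  fixes n :: nat and dD :: "'b::finite \<Rightarrow> 'b \<Rightarrow> R"
    and F :: "gen \<Rightarrow> 'b \<Rightarrow> R" and G :: "'b \<Rightarrow> gen \<Rightarrow> R"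
  assumes "n \<ge> 3"
    and "is_complex dD"
    and "knotlike dD"
    and "chain_map_CD n dD F"
    and "chain_map_DC n dD G"
  shows "boundary_mod n (\<lambda>h. \<Sum>b\<in>UNIV. F (Al n) b * G b h)"
proof -
  define X :: "bit poly" where "X = [:0,1:]"
  define N1 where "N1 = n*(n-1) div 2"
  define N2 where "N2 = n*(n+1) div 2"
  define k where "k = N2 - (n-1)"
  have n3: "n \<ge> 3" by fact
  have N2k: "N2 = k + (n-1)"
  proof -
    have "n*(n+1) \<ge> 2*(n-1)" using n3 by (cases n) auto
    then have "N2 \<ge> n - 1" unfolding N2_def by linarith
    then show ?thesis unfolding k_def by simp
  qed
  obtain z where zc: "cycU dD z"
    and zall: "\<forall>x. cycU dD x \<longrightarrow> (\<exists>p. bndU dD (\<lambda>b. x b - p * z b))"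
    and zinj: "\<forall>p. bndU dD (\<lambda>b. p * z b) \<longrightarrow> p = 0"
    using assms(3) unfolding knotlike_def by blast
  define a where "a s = (\<lambda>b. evV1 (F (Al s) b))" for s
  have cyc: "cycU dD (a s)" if "1 \<le> s" "s \<le> 2*n-1" for s
  proof -
    have g: "Al s \<in> gens n" using that unfolding gens_def by auto
    have "(\<Sum>b'\<in>UNIV. F (Al s) b' * dD b' b) = 0" for b
    proof -
      have "(\<Sum>h\<in>gens n. bdC n (Al s) h * F h b) = (\<Sum>b'\<in>UNIV. F (Al s) b' * dD b' b)"
        using assms(4) g unfolding chain_map_CD_def by blast
      then show ?thesis by simp
    qed
    then show ?thesis unfolding cycU_def dU_def a_def
      by (simp add: evV1_mult[symmetric] evV1_sum[symmetric] evV1_0)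
  qed
  have decomp: "\<exists>p w. \<forall>b. a s b = p * z b + dU dD w b" if rng: "1 \<le> s" "s \<le> 2*n-1" for s
  proof -
    obtain p where "bndU dD (\<lambda>b. a s b - p * z b)" using zall cyc[OF rng] by blast
    then obtain w where "(\<lambda>b. a s b - p * z b) = dU dD w" unfolding bndU_def by blast
    then have "\<forall>b. a s b = p * z b + dU dD w b" by (metis add_diff_cancel_left' diff_add_cancel add.commute)
    then show ?thesis by blast
  qed
  obtain p1 w1 where d1: "\<And>b. a (n-1) b = p1 * z b + dU dD w1 b"
    proof -
    have "1 \<le> n-1" "n-1 \<le> 2*n-1" using n3 by auto
    then show ?thesis using decomp[of "n-1"] that by blast
  qed
  obtain p2 w2 where d2: "\<And>b. a n b = p2 * z b + dU dD w2 b"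
    proof -
    have "1 \<le> n" "n \<le> 2*n-1" using n3 by auto
    then show ?thesis using decomp[of "n"] that by blast
  qed
  define c where "c = (\<lambda>b. evV1 (F (B0 (n-1)) b))"
  have rel: "X^N2 * a (n-1) b + X^k * a n b = dU dD c b" for b
  proof -
    have g: "B0 (n-1) \<in> gens n" using n3 unfolding gens_def by auto
    have ga: "Al (n-1) \<in> gens n" "Al n \<in> gens n" using n3 unfolding gens_def by auto
    have bd: "bdC n (B0 (n-1)) h = (if h = Al (n-1) then UU^N2 * VV^N1 else 0)
        + (if h = Al n then UU^k * VV^N2 else 0)" for h
    proof -
      have c1: "\<not> n-1 \<le> n-2" "n-1 \<le> n" "n*(n-1) div 2 + (n-1) + 1 - n = N1" "n-1+1 = n"
        "N2 - (n-1) = k" "n*(n+1) div 2 = N2"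
        using n3 unfolding N1_def N2_def k_def by auto
      show ?thesis by (simp only: bdC.simps c1 if_False if_True)
    qed
    have "(\<Sum>h\<in>gens n. bdC n (B0 (n-1)) h * F h b)
       = UU^N2 * VV^N1 * F (Al (n-1)) b + UU^k * VV^N2 * F (Al n) b"
          proof -
      have "(\<Sum>h\<in>gens n. bdC n (B0 (n-1)) h * F h b)
         = (\<Sum>h\<in>gens n. (if h = Al (n-1) then UU^N2 * VV^N1 * F h b else 0)
              + (if h = Al n then UU^k * VV^N2 * F h b else 0))"
        unfolding bd by (rule sum.cong) (auto simp: distrib_right)
      also have "\<dots> = UU^N2 * VV^N1 * F (Al (n-1)) b + UU^k * VV^N2 * F (Al n) b"
        by (simp only: sum.distrib sum.delta[OF finite_gens] ga if_True)
      finally show ?thesis .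
    qed
    then have "UU^N2 * VV^N1 * F (Al (n-1)) b + UU^k * VV^N2 * F (Al n) b
       = (\<Sum>b'\<in>UNIV. F (B0 (n-1)) b' * dD b' b)"
      using assms(4) g unfolding chain_map_CD_def by metis
    then have "evV1 (UU^N2 * VV^N1 * F (Al (n-1)) b + UU^k * VV^N2 * F (Al n) b)
       = evV1 (\<Sum>b'\<in>UNIV. F (B0 (n-1)) b' * dD b' b)" by simp
    then show ?thesis
      by (simp add: evV1_add evV1_mult evV1_pow evV1_sum evV1_UU evV1_VV X_def a_def c_def dU_def)
  qed
  have "bndU dD (\<lambda>b. (X^N2 * p1 + X^k * p2) * z b)"
  proof -
    have e: "(X^N2 * p1 + X^k * p2) * z b = dU dD c b - (X^N2 * dU dD w1 b + X^k * dU dD w2 b)" for b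
      using rel[of b] d1[of b] d2[of b] by (simp add: algebra_simps)
    have "(\<lambda>b. (X^N2 * p1 + X^k * p2) * z b) = dU dD (\<lambda>b. c b - (X^N2 * w1 b + X^k * w2 b))"
      by (simp add: e dU_diff dU_lin)
    then show ?thesis unfolding bndU_def by blast
  qed
  then have "X^N2 * p1 + X^k * p2 = 0" using zinj by blast
  then have "X^k * (X^(n-1) * p1 + p2) = 0" unfolding N2k by (simp add: algebra_simps power_add)
  moreover have "X^k \<noteq> 0" unfolding X_def by simp
  ultimately have "X^(n-1) * p1 + p2 = 0" using mult_eq_0_iff by blast
  then have p2dvd: "X^(n-1) dvd p2"
    by (metis add_eq_0_iff dvd_minus_iff dvd_triv_left)
  define y where "y g = (\<Sum>b'\<in>UNIV. w2 b' * evV1 (G b' g))" for g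
  show ?thesis unfolding boundary_mod_def
  proof (intro exI ballI)
    fix h assume h: "h \<in> gens n"
    have A: "(\<Sum>b\<in>UNIV. dU dD w2 b * evV1 (G b h)) = (\<Sum>g\<in>gens n. y g * evV1 (bdC n g h))"
    proof -
      have "(\<Sum>b\<in>UNIV. dU dD w2 b * evV1 (G b h))
          = (\<Sum>b\<in>UNIV. \<Sum>b'\<in>UNIV. w2 b' * evV1 (dD b' b * G b h))"
        by (simp add: dU_def sum_distrib_right evV1_mult mult.assoc)
      also have "\<dots> = (\<Sum>b'\<in>UNIV. w2 b' * evV1 (\<Sum>b\<in>UNIV. dD b' b * G b h))"
        by (subst sum.swap) (simp add: evV1_sum sum_distrib_left)
      also have "\<dots> = (\<Sum>b'\<in>UNIV. w2 b' * evV1 (\<Sum>g\<in>gens n. G b' g * bdC n g h))"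
        using assms(5) h unfolding chain_map_DC_def by simp
      also have "\<dots> = (\<Sum>g\<in>gens n. y g * evV1 (bdC n g h))"
        unfolding y_def
        by (simp add: evV1_sum evV1_mult sum_distrib_left sum_distrib_right mult.assoc sum.swap[of _ "gens n" UNIV])
      finally show ?thesis .
    qed
    have "evV1 (\<Sum>b\<in>UNIV. F (Al n) b * G b h) = (\<Sum>b\<in>UNIV. a n b * evV1 (G b h))"
      by (simp add: a_def evV1_sum evV1_mult)
    also have "\<dots> = p2 * (\<Sum>b\<in>UNIV. z b * evV1 (G b h)) + (\<Sum>b\<in>UNIV. dU dD w2 b * evV1 (G b h))"
      by (simp add: d2 distrib_right sum.distrib sum_distrib_left mult.assoc)
    finally have "(\<Sum>g\<in>gens n. y g * evV1 (bdC n g h)) - evV1 (\<Sum>b\<in>UNIV. F (Al n) b * G b h)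
        = - (p2 * (\<Sum>b\<in>UNIV. z b * evV1 (G b h)))" using A by simp
    then show "[:0, 1:] ^ (n - 1) dvd (\<Sum>g\<in>gens n. y g * evV1 (bdC n g h)) - evV1 (\<Sum>b\<in>UNIV. F (Al n) b * G b h)"
      using p2dvd unfolding X_def by simp
  qed
qed

end
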